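(* Let $n\in\mathbb{N}$, let $\nu$ be a Lévy measure on $\mathbb{R}^n$, let $\sigma^2\in\mathbb{R}^{n\times n}$ be symmetric nonnegative definite and $\Gamma\in\mathbb{R}^n$. For $\Lambda>1$ let $h_\Lambda\ge1$ and $T_\Lambda>0$ be such that $\lim_{\Lambda\to\infty}\frac{\Lambda}{h_\Lambda}=\lim_{\Lambda\to\infty}\frac{\Lambda}{h_\Lambda T_\Lambda}=\infty$, and let $\xi^\Lambda$ be a Lévy process with generating triplet $(\sigma^2,\nu|_{\{y\in\mathbb{R}^n:|y|\le h_\Lambda\}},\Gamma)$. Then for every $\delta>0$ and $k\ge0$ there is $\Lambda_1$ such that for all $\Lambda>\Lambda_1$, \[ \sup_{t\le T_\Lambda}(1\vee t^{-k})\,\mathbb{P}(|\xi^\Lambda_t|>\Lambda)\le\exp\Big(-(1-\delta)\frac{\Lambda}{h_\Lambda}\ln\frac{\Lambda}{h_\Lambda T_\Lambda}\Big). \]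
   Context: Generating triplet convention: a Lévy process $\zeta$ with triplet $(\sigma^2,\mu,\Gamma)$ has $\mathbb{E}e^{i\langle\lambda,\zeta_t\rangle}=\exp(t(-\frac12\langle\lambda,\sigma^2\lambda\rangle+i\langle\lambda,\Gamma\rangle+\int(e^{i\langle\lambda,y\rangle}-1-i\langle\lambda,y\rangle\mathbf 1_{\{|y|\le1\}})\mu(dy)))$. *)

theory Defs
  imports "HOL-Probability.Probability"
begin

definition levy_measure :: "(real^'n) measure \<Rightarrow> bool" where
  "levy_measure nu \<longleftrightarrow>
     sets nu = sets borel \<and> emeasure nu {0} = 0 \<and>
     (\<integral>\<^sup>+ y. ennreal (min 1 ((norm y)\<^sup>2)) \<partial>nu) < \<infinity>"

definition sym_nonneg_def :: "real^'n^'n \<Rightarrow> bool" where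
  "sym_nonneg_def S \<longleftrightarrow> transpose S = S \<and> (\<forall>x. 0 \<le> x \<bullet> (S *v x))"

text \<open>Levy exponent for the generating triplet (S, mu, G), with truncation
  function the indicator of the closed unit ball.\<close>
definition levy_exponent ::
  "real^'n^'n \<Rightarrow> (real^'n) measure \<Rightarrow> real^'n \<Rightarrow> real^'n \<Rightarrow> complex" where
  "levy_exponent S mu G l =
     - complex_of_real ((l \<bullet> (S *v l)) / 2) + \<i> * complex_of_real (l \<bullet> G)
     + integral\<^sup>L mu (\<lambda>y. exp (\<i> * complex_of_real (l \<bullet> y)) - 1
          - \<i> * complex_of_real (l \<bullet> y) * complex_of_real (indicator (cball 0 1) y))"

definition levy_process ::
  "'a measure \<Rightarrow> (real \<Rightarrow> 'a \<Rightarrow> real^'n) \<Rightarrow> real^'n^'n \<Rightarrow> (real^'n) measure \<Rightarrow> real^'n \<Rightarrow> bool" where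
  "levy_process M X S mu G \<longleftrightarrow>
     prob_space M \<and>
     (\<forall>t\<ge>0. X t \<in> borel_measurable M) \<and>
     (\<forall>\<omega>\<in>space M. X 0 \<omega> = 0) \<and>
     (\<forall>(tt::nat \<Rightarrow> real) m. 0 \<le> tt 0 \<and> mono tt \<longrightarrow>
        prob_space.indep_vars M (\<lambda>_. borel) (\<lambda>i \<omega>. X (tt (Suc i)) \<omega> - X (tt i) \<omega>) {..<m}) \<and>
     (\<forall>s t. 0 \<le> s \<and> s \<le> t \<longrightarrow>
        distr M borel (\<lambda>\<omega>. X t \<omega> - X s \<omega>) = distr M borel (X (t - s))) \<and>
     (AE \<omega> in M. (\<forall>t\<ge>0. continuous (at_right t) (\<lambda>s. X s \<omega>)) \<and>
                  (\<forall>t>0. \<exists>L. ((\<lambda>s. X s \<omega>) \<longlongrightarrow> L) (at_left t))) \<and>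
     (\<forall>t\<ge>0. \<forall>l. integral\<^sup>L M (\<lambda>\<omega>. exp (\<i> * complex_of_real (l \<bullet> X t \<omega>)))
                   = exp (complex_of_real t * levy_exponent S mu G l))"

end

theory Submission
  imports Defs "HOL-Complex_Analysis.Complex_Analysis"
begin


lemma alt_binom_step:
  fixes g :: "nat \<Rightarrow> 'a::comm_ring_1"
  shows "(\<Sum>j\<le>Suc n. (-1)^j * of_nat (Suc n choose j) * g j)
       = (\<Sum>j\<le>n. (-1)^j * of_nat (n choose j) * (g j - g (Suc j)))"
proof -
  have pt: "(-1)^(Suc j) * of_nat (Suc n choose Suc j) * g (Suc j) =
       (-1)^(Suc j) * of_nat (n choose Suc j) * g (Suc j) - (-1)^j * of_nat (n choose j) * g (Suc j)" for j
    by (simp add: algebra_simps)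
  have s1: "(\<Sum>j\<le>Suc n. (-1)^j * of_nat (Suc n choose j) * g j)
      = g 0 + (\<Sum>j\<le>n. (-1)^(Suc j) * of_nat (Suc n choose Suc j) * g (Suc j))"
    by (subst sum.atMost_Suc_shift) simp
  have s2: "(\<Sum>j\<le>Suc n. (-1)^j * of_nat (n choose j) * g j)
      = g 0 + (\<Sum>j\<le>n. (-1)^(Suc j) * of_nat (n choose Suc j) * g (Suc j))"
    by (subst sum.atMost_Suc_shift) simp
  have s3: "(\<Sum>j\<le>Suc n. (-1)^j * of_nat (n choose j) * g j) = (\<Sum>j\<le>n. (-1)^j * of_nat (n choose j) * g j)"
    by (simp add: binomial_eq_0)
  show ?thesis
    unfolding s1 pt sum_subtractf
    using s2 s3 by (simp add: right_diff_distrib sum_subtractf algebra_simps)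
qed

definition fd :: "nat \<Rightarrow> complex \<Rightarrow> nat \<Rightarrow> complex" where
  "fd n c k = (\<Sum>j\<le>n. (-1)^j * of_nat (n choose j) * (c - of_nat j)^k)"

lemma fd_rec: "fd (Suc n) c k = (\<Sum>i<k. of_nat (k choose i) * fd n (c-1) i)"
proof -
  have e: "(c - of_nat j)^k - (c - (1 + of_nat j))^k = (\<Sum>i<k. of_nat (k choose i) * (c - 1 - of_nat j)^i)" for j
  proof -
    have "(c - of_nat j)^k = ((c - 1 - of_nat j) + 1)^k" by (simp add: algebra_simps)
    also have "\<dots> = (\<Sum>i\<le>k. of_nat (k choose i) * (c - 1 - of_nat j)^i)"
      by (subst binomial_ring) (simp add: mult.commute)
    also have "\<dots> = (\<Sum>i<k. of_nat (k choose i) * (c - 1 - of_nat j)^i) + (c - 1 - of_nat j)^k"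
      by (simp add: lessThan_Suc_atMost[symmetric])
    finally show ?thesis by (simp add: algebra_simps)
  qed
  have "fd (Suc n) c k = (\<Sum>j\<le>n. (-1)^j * of_nat (n choose j) * ((c - of_nat j)^k - (c - of_nat (Suc j))^k))"
    unfolding fd_def by (rule alt_binom_step)
  also have "\<dots> = (\<Sum>j\<le>n. \<Sum>i<k. (-1)^j * of_nat (n choose j) * (of_nat (k choose i) * (c - 1 - of_nat j)^i))"
    by (simp only: of_nat_Suc e sum_distrib_left)
  also have "\<dots> = (\<Sum>i<k. \<Sum>j\<le>n. (-1)^j * of_nat (n choose j) * (of_nat (k choose i) * (c - 1 - of_nat j)^i))"
    by (rule sum.swap)
  also have "\<dots> = (\<Sum>i<k. of_nat (k choose i) * fd n (c-1) i)"
    unfolding fd_def by (simp add: sum_distrib_left algebra_simps)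
  finally show ?thesis .
qed

lemma fd_vals: "(\<forall>c k. k < n \<longrightarrow> fd n c k = 0) \<and> (\<forall>c. fd n c n = fact n)"
proof (induction n)
  case 0
  then show ?case by (simp add: fd_def)
next
  case (Suc n)
  have A: "fd (Suc n) c k = 0" if "k < Suc n" for c k
    unfolding fd_rec using Suc.IH that by (intro sum.neutral) auto
  have B: "fd (Suc n) c (Suc n) = fact (Suc n)" for c
  proof -
  have "fd (Suc n) c (Suc n) = (\<Sum>i<Suc n. of_nat (Suc n choose i) * fd n (c-1) i)"
    by (rule fd_rec)
  also have "\<dots> = of_nat (Suc n choose n) * fd n (c-1) n"
    using Suc.IH by (simp add: lessThan_Suc)
  also have "\<dots> = fact (Suc n)" using Suc.IH by (simp add: algebra_simps)
  finally show ?thesis .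
  qed
  show ?case using A B by blast
qed



definition tc :: "(complex \<Rightarrow> complex) \<Rightarrow> nat \<Rightarrow> complex" where
  "tc F k = (deriv ^^ k) F 0 / fact k"

lemma entire_sums:
  assumes "F holomorphic_on UNIV"
  shows "(\<lambda>k. tc F k * w^k) sums F w"
proof -
  have "F holomorphic_on ball 0 (norm w + 1)" using assms by (rule holomorphic_on_subset) auto
  from holomorphic_power_series[OF this, of w] show ?thesis by (simp add: tc_def)
qed

lemma entire_coeff_bound:
  assumes "F holomorphic_on UNIV" "r > 0" "\<And>z. norm z = r \<Longrightarrow> norm (F z) \<le> B"
  shows "norm (tc F k) \<le> B / r^k"
proof -
  have "norm ((deriv ^^ k) F 0) \<le> fact k * B / r^k"
  proof (rule Cauchy_inequality)
    show "F holomorphic_on ball 0 r" using assms(1) by (rule holomorphic_on_subset) auto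
    show "continuous_on (cball 0 r) F"
      using holomorphic_on_imp_continuous_on[OF assms(1)] by (rule continuous_on_subset) auto
  qed (use assms in auto)
  then show ?thesis by (simp add: tc_def norm_divide field_simps)
qed

lemma entire_remainder:
  assumes F: "F holomorphic_on UNIV" and B1: "\<And>z. norm z = 1 \<Longrightarrow> norm (F z) \<le> B1"
    and w: "norm w \<le> 1/2"
  shows "norm (F w - (\<Sum>k<N. tc F k * w^k)) \<le> 2 * B1 * norm w ^ N"
proof -
  have S: "(\<lambda>i. tc F (i + N) * w^(i+N)) sums (F w - (\<Sum>k<N. tc F k * w^k))"
    using sums_split_initial_segment[OF entire_sums[OF F]] .
  have cb: "norm (tc F k) \<le> B1" for k
    using entire_coeff_bound[OF F, of 1 B1 k] B1 by simp
  have G: "(\<lambda>i. B1 * norm w ^ N * norm w ^ i) sums (B1 * norm w ^ N * (1 / (1 - norm w)))"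
    by (intro sums_mult geometric_sums) (use w in auto)
  have le: "norm (tc F (i + N) * w^(i+N)) \<le> B1 * norm w ^ N * norm w ^ i" for i
  proof -
    have "norm (tc F (i + N) * w^(i+N)) = norm (tc F (i+N)) * (norm w ^ N * norm w ^ i)"
      by (simp add: norm_mult norm_power power_add mult_ac)
    also have "\<dots> \<le> B1 * (norm w ^ N * norm w ^ i)"
      by (rule mult_right_mono[OF cb]) auto
    finally show ?thesis by (simp add: mult_ac)
  qed
  have sn: "summable (\<lambda>i. norm (tc F (i + N) * w^(i+N)))"
    by (rule summable_comparison_test'[OF sums_summable[OF G]]) (use le in auto)
  have "norm (F w - (\<Sum>k<N. tc F k * w^k)) = norm (\<Sum>i. tc F (i + N) * w^(i+N))"
    using S by (simp add: sums_iff)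
  also have "\<dots> \<le> (\<Sum>i. norm (tc F (i + N) * w^(i+N)))" by (rule summable_norm[OF sn])
  also have "\<dots> \<le> (\<Sum>i. B1 * norm w ^ N * norm w ^ i)"
    by (rule suminf_le[OF le sn sums_summable[OF G]])
  also have "\<dots> = B1 * norm w ^ N * (1 / (1 - norm w))" using G by (simp add: sums_iff)
  also have "\<dots> \<le> B1 * norm w ^ N * 2"
  proof (rule mult_left_mono)
    show "1 / (1 - norm w) \<le> 2" using w by (simp add: field_simps)
    have "0 \<le> norm (F 1)" by simp
    also have "\<dots> \<le> B1" using B1[of 1] by simp
    finally show "0 \<le> B1 * norm w ^ N" by simp
  qed
  finally show ?thesis by (simp add: mult_ac)
qed

definition cdiff :: "(complex \<Rightarrow> complex) \<Rightarrow> nat \<Rightarrow> real \<Rightarrow> complex" where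
  "cdiff F m s = (\<Sum>j\<le>2*m. (-1)^j * of_nat (2*m choose j) * F (of_real ((real m - real j) * s)))"

lemma cdiff_poly:
  fixes c :: "nat \<Rightarrow> complex"
  shows "(\<Sum>j\<le>2*m. (-1)^j * of_nat (2*m choose j) * (\<Sum>k<Suc (2*m). c k * (of_real ((real m - real j) * s))^k))
   = c (2*m) * fact (2*m) * of_real s ^ (2*m)"
proof -
  have "(\<Sum>j\<le>2*m. (-1)^j * of_nat (2*m choose j) * (\<Sum>k<Suc (2*m). c k * (of_real ((real m - real j) * s))^k))
     = (\<Sum>k<Suc (2*m). c k * of_real s ^ k * fd (2*m) (of_nat m) k)"
  proof -
    have pw: "(of_real ((real m - real j) * s) :: complex)^k = (of_nat m - of_nat j)^k * of_real s ^ k" for j k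
      by (simp add: power_mult_distrib)
    have "(\<Sum>j\<le>2*m. (-1)^j * of_nat (2*m choose j) * (\<Sum>k<Suc (2*m). c k * (of_real ((real m - real j) * s))^k))
       = (\<Sum>j\<le>2*m. \<Sum>k<Suc (2*m). c k * of_real s ^ k * ((-1)^j * of_nat (2*m choose j) * (of_nat m - of_nat j)^k))"
      unfolding pw sum_distrib_left by (intro sum.cong refl) (simp add: mult_ac)
    also have "\<dots> = (\<Sum>k<Suc (2*m). \<Sum>j\<le>2*m. c k * of_real s ^ k * ((-1)^j * of_nat (2*m choose j) * (of_nat m - of_nat j)^k))"
      by (rule sum.swap)
    also have "\<dots> = (\<Sum>k<Suc (2*m). c k * of_real s ^ k * fd (2*m) (of_nat m) k)"
      unfolding fd_def sum_distrib_left ..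
    finally show ?thesis .
  qed
  also have "\<dots> = c (2*m) * of_real s ^ (2*m) * fd (2*m) (of_nat m) (2*m)"
    using fd_vals[of "2*m"] by (simp add: lessThan_Suc)
  also have "\<dots> = c (2*m) * fact (2*m) * of_real s ^ (2*m)"
    using fd_vals[of "2*m"] by simp
  finally show ?thesis .
qed



lemma cdiff_bound:
  assumes F: "F holomorphic_on UNIV" and B1: "\<And>z. norm z = 1 \<Longrightarrow> norm (F z) \<le> B1"
    and s: "real m * \<bar>s\<bar> \<le> 1/2"
  shows "norm (cdiff F m s - tc F (2*m) * fact (2*m) * of_real s ^ (2*m))
         \<le> 4^m * 2 * B1 * (real m * \<bar>s\<bar>)^(2*m+1)"
proof -
  define w where "w j = (of_real ((real m - real j) * s) :: complex)" for j
  define P where "P z = (\<Sum>k<Suc (2*m). tc F k * z^k)" for z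
  have wb: "norm (w j) \<le> real m * \<bar>s\<bar>" if "j \<le> 2*m" for j
  proof -
    have "\<bar>real m - real j\<bar> \<le> real m" using that by linarith
    then show ?thesis unfolding w_def norm_of_real abs_mult by (intro mult_right_mono) auto
  qed
  have "cdiff F m s = (\<Sum>j\<le>2*m. (-1)^j * of_nat (2*m choose j) * P (w j))
        + (\<Sum>j\<le>2*m. (-1)^j * of_nat (2*m choose j) * (F (w j) - P (w j)))"
    unfolding cdiff_def w_def[symmetric] by (simp add: sum.distrib[symmetric] algebra_simps)
  also have "(\<Sum>j\<le>2*m. (-1)^j * of_nat (2*m choose j) * P (w j)) = tc F (2*m) * fact (2*m) * of_real s ^ (2*m)"
    unfolding P_def w_def by (rule cdiff_poly)
  finally have eq: "cdiff F m s - tc F (2*m) * fact (2*m) * of_real s ^ (2*m)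
      = (\<Sum>j\<le>2*m. (-1)^j * of_nat (2*m choose j) * (F (w j) - P (w j)))" by simp
  have "norm (\<Sum>j\<le>2*m. (-1)^j * of_nat (2*m choose j) * (F (w j) - P (w j)))
        \<le> (\<Sum>j\<le>2*m. norm ((-1)^j * of_nat (2*m choose j) * (F (w j) - P (w j))))"
    by (rule norm_sum)
  also have "\<dots> \<le> (\<Sum>j\<le>2*m. real (2*m choose j) * (2 * B1 * (real m * \<bar>s\<bar>)^(2*m+1)))"
  proof (rule sum_mono)
    fix j assume j: "j \<in> {..2*m}"
    have r: "norm (F (w j) - P (w j)) \<le> 2 * B1 * norm (w j) ^ Suc (2*m)"
      unfolding P_def by (rule entire_remainder[OF F B1]) (use wb[of j] j s in auto)
    also have "\<dots> \<le> 2 * B1 * (real m * \<bar>s\<bar>)^(2*m+1)"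
    proof (rule mult_left_mono)
      show "norm (w j) ^ Suc (2*m) \<le> (real m * \<bar>s\<bar>)^(2*m+1)"
        using wb[of j] j power_mono[of "norm (w j)" "real m * \<bar>s\<bar>" "Suc (2*m)"] by simp
      have "0 \<le> norm (F 1)" by simp
      also have "\<dots> \<le> B1" using B1[of 1] by simp
      finally show "0 \<le> 2 * B1" by simp
    qed
    finally show "norm ((-1)^j * of_nat (2*m choose j) * (F (w j) - P (w j)))
         \<le> real (2*m choose j) * (2 * B1 * (real m * \<bar>s\<bar>)^(2*m+1))"
      by (simp add: norm_mult norm_power mult_left_mono)
  qed
  also have "\<dots> = 2^(2*m) * (2 * B1 * (real m * \<bar>s\<bar>)^(2*m+1))"
    by (simp add: sum_distrib_right[symmetric] choose_row_sum flip: of_nat_sum)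
  also have "\<dots> = 4^m * 2 * B1 * (real m * \<bar>s\<bar>)^(2*m+1)"
    by (simp add: power_mult)
  finally show ?thesis using eq by simp
qed



lemma cos_power_exp:
  fixes y :: real
  shows "complex_of_real ((2 - 2*cos y)^m)
    = (-1)^m * (\<Sum>j\<le>2*m. (-1)^j * of_nat (2*m choose j) * exp (\<i> * of_real ((real m - real j) * y)))"
proof -
  define a where "a = exp (\<i> * of_real (y/2))"
  define b where "b = exp (- (\<i> * of_real (y/2)))"
  have ab: "a * b = 1" unfolding a_def b_def by (simp add: exp_minus)
  have ab2: "a * (b * 2) = 2" using ab by (simp add: mult.assoc[symmetric])
  have "a^2 = exp (\<i> * of_real y)" unfolding a_def by (simp add: exp_of_nat_mult[symmetric] field_simps)
  moreover have "b^2 = exp (-(\<i> * of_real y))" unfolding b_def by (simp add: exp_of_nat_mult[symmetric] field_simps)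
  ultimately have c: "complex_of_real (2 - 2*cos y) = - ((a - b)^2)"
  proof -
    have "(a - b)^2 = a^2 + b^2 - 2*(a*b)" by (simp add: power2_diff)
    also have "\<dots> = exp (\<i> * of_real y) + exp (-(\<i> * of_real y)) - 2"
      using ab \<open>a^2 = _\<close> \<open>b^2 = _\<close> by simp
    finally have 1: "(a - b)^2 = exp (\<i> * of_real y) + exp (-(\<i> * of_real y)) - 2" .
    have "complex_of_real (2 - 2*cos y) = 2 - 2 * cos (of_real y)" by (simp add: cos_of_real)
    also have "\<dots> = 2 - (exp (\<i> * of_real y) + exp (-(\<i> * of_real y)))" by (simp add: cos_exp_eq field_simps)
    finally show ?thesis using 1 by simp
  qed
  have trm: "(-b)^j * a^(2*m-j) = (-1)^j * exp (\<i> * of_real ((real m - real j) * y))" if "j \<le> 2*m" for j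
  proof -
    have "(-b)^j * a^(2*m-j) = (-1)^j * (exp (of_nat j * (- (\<i> * of_real (y/2)))) * exp (of_nat (2*m-j) * (\<i> * of_real (y/2))))"
      unfolding power_minus[of b j] unfolding a_def b_def exp_of_nat_mult by simp
    also have "exp (of_nat j * (- (\<i> * of_real (y/2)))) * exp (of_nat (2*m-j) * (\<i> * of_real (y/2)))
       = exp (\<i> * of_real ((real m - real j) * y))"
    proof -
      have "of_nat j * (- (\<i> * of_real (y/2))) + of_nat (2*m-j) * (\<i> * of_real (y/2)) = \<i> * complex_of_real ((real m - real j) * y)"
        using that by (simp add: of_nat_diff field_simps)
      then show ?thesis by (simp only: exp_add[symmetric])
    qed
    finally show ?thesis .
  qed
  have "complex_of_real ((2 - 2*cos y)^m) = (- ((a - b)^2))^m" by (simp only: of_real_power c)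
  also have "\<dots> = (-1)^m * (a - b)^(2*m)" by (simp only: power_minus[of "(a-b)^2" m] power_mult)
  also have "\<dots> = (-1)^m * ((-b) + a)^(2*m)" by simp
  also have "\<dots> = (-1)^m * (\<Sum>j\<le>2*m. of_nat (2*m choose j) * ((-b)^j * a^(2*m-j)))"
    unfolding binomial_ring by (simp add: mult_ac)
  also have "\<dots> = (-1)^m * (\<Sum>j\<le>2*m. (-1)^j * of_nat (2*m choose j) * exp (\<i> * of_real ((real m - real j) * y)))"
  proof (rule arg_cong2[where f="(*)"], rule refl, rule sum.cong, rule refl)
    fix j assume "j \<in> {..2*m}"
    then have "(-b)^j * a^(2*m-j) = (-1)^j * exp (\<i> * of_real ((real m - real j) * y))" by (intro trm) auto
    then show "of_nat (2*m choose j) * ((-b)^j * a^(2*m-j)) = (-1)^j * of_nat (2*m choose j) * exp (\<i> * of_real ((real m - real j) * y))"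
      by (simp only: mult_ac)
  qed
  finally show ?thesis .
qed

lemma int_cos_power:
  assumes M: "prob_space M" and Y[measurable]: "Y \<in> borel_measurable M"
    and H: "\<And>s::real. (\<integral>\<omega>. exp (\<i> * of_real (s * Y \<omega>)) \<partial>M) = F (of_real s)"
  shows "integrable M (\<lambda>\<omega>. (2 - 2*cos (s * Y \<omega>))^m)"
    and "(\<integral>\<omega>. (2 - 2*cos (s * Y \<omega>))^m \<partial>M) = norm (cdiff F m s)"
proof -
  interpret prob_space M by (rule M)
  have bd: "\<bar>(2 - 2*cos (s * Y \<omega>))^m\<bar> \<le> 4^m" for \<omega>
  proof -
    have "\<bar>2 - 2*cos (s * Y \<omega>)\<bar> \<le> 4" using cos_ge_minus_one[of "s * Y \<omega>"] cos_le_one[of "s * Y \<omega>"] by linarith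
    then show ?thesis unfolding power_abs by (intro power_mono) auto
  qed
  show int: "integrable M (\<lambda>\<omega>. (2 - 2*cos (s * Y \<omega>))^m)"
    by (rule integrable_const_bound[of _ "4^m"]) (use bd in auto)
  have ie: "integrable M (\<lambda>\<omega>. exp (\<i> * of_real (((real m - real j) * s) * Y \<omega>)))" for j
    by (rule integrable_iexp) auto
  have "complex_of_real (\<integral>\<omega>. (2 - 2*cos (s * Y \<omega>))^m \<partial>M)
      = (\<integral>\<omega>. complex_of_real ((2 - 2*cos (s * Y \<omega>))^m) \<partial>M)" by (rule integral_complex_of_real[symmetric])
  also have "\<dots> = (\<integral>\<omega>. (-1)^m * (\<Sum>j\<le>2*m. (-1)^j * of_nat (2*m choose j) * exp (\<i> * of_real (((real m - real j) * s) * Y \<omega>))) \<partial>M)"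
    by (intro Bochner_Integration.integral_cong refl) (simp only: cos_power_exp mult.assoc)
  also have "\<dots> = (-1)^m * (\<Sum>j\<le>2*m. (-1)^j * of_nat (2*m choose j) * (\<integral>\<omega>. exp (\<i> * of_real (((real m - real j) * s) * Y \<omega>)) \<partial>M))"
    using ie by (simp add: integral_sum integral_mult_right_zero)
  also have "\<dots> = (-1)^m * cdiff F m s"
    unfolding cdiff_def H ..
  finally have e: "complex_of_real (\<integral>\<omega>. (2 - 2*cos (s * Y \<omega>))^m \<partial>M) = (-1)^m * cdiff F m s" .
  have nn: "0 \<le> (\<integral>\<omega>. (2 - 2*cos (s * Y \<omega>))^m \<partial>M)"
    by (intro integral_nonneg_AE AE_I2 zero_le_power) (use cos_le_one in auto)
  have "norm (complex_of_real (\<integral>\<omega>. (2 - 2*cos (s * Y \<omega>))^m \<partial>M)) = norm (cdiff F m s)"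
    unfolding e by (simp add: norm_mult norm_power)
  then show "(\<integral>\<omega>. (2 - 2*cos (s * Y \<omega>))^m \<partial>M) = norm (cdiff F m s)" using nn by simp
qed



lemma cos_sinc: "(2 - 2 * cos (s * y)) / s^2 = y^2 * (sinc (s * y / 2))^2" if "s \<noteq> 0" for s y :: real
proof -
  have c: "2 - 2 * cos (s * y) = 4 * (sin (s * y / 2))^2"
    using cos_double_sin[of "s * y / 2"] by simp
  show ?thesis
  proof (cases "y = 0")
    case True then show ?thesis by simp
  next
    case False
    then have "s * y / 2 \<noteq> 0" using that by simp
    then show ?thesis unfolding c using that False by (simp add: field_simps power2_eq_square)
  qed
qed

lemma moment_bound:
  assumes M: "prob_space M" and Y[measurable]: "Y \<in> borel_measurable M"
    and H: "\<And>s::real. (\<integral>\<omega>. exp (\<i> * of_real (s * Y \<omega>)) \<partial>M) = F (of_real s)"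
    and F: "F holomorphic_on UNIV" and B1: "\<And>z. norm z = 1 \<Longrightarrow> norm (F z) \<le> B1"
    and r: "r > 0" and Br: "\<And>z. norm z = r \<Longrightarrow> norm (F z) \<le> B"
  shows "(\<integral>\<^sup>+\<omega>. ennreal (Y \<omega> ^ (2*m)) \<partial>M) \<le> ennreal (fact (2*m) * B / r^(2*m))"
proof -
  interpret prob_space M by (rule M)
  define sj where "sj j = 1 / real (j + (2*m+2))" for j
  have sj_pos: "sj j > 0" for j unfolding sj_def by simp
  have sj_small: "real m * \<bar>sj j\<bar> \<le> 1/2" for j
    unfolding sj_def by (simp add: field_simps)
  have sj_lim: "sj \<longlonglongrightarrow> 0"
    unfolding sj_def using LIMSEQ_ignore_initial_segment[OF lim_1_over_n, of "2*m+2"] by simp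
  define f where "f j \<omega> = ennreal (((2 - 2 * cos (sj j * Y \<omega>)) / sj j ^ 2) ^ m)" for j \<omega>
  define c where "c = fact (2*m) * B / r^(2*m)"
  define C where "C = 4^m * 2 * B1 * real m ^ (2*m+1)"
  have ptw: "(\<lambda>j. f j \<omega>) \<longlonglongrightarrow> ennreal (Y \<omega> ^ (2*m))" for \<omega>
  proof -
    have "(\<lambda>j. sj j * Y \<omega> / 2) \<longlonglongrightarrow> 0 * Y \<omega> / 2"
      by (intro tendsto_intros sj_lim) simp
    then have "(\<lambda>j. sinc (sj j * Y \<omega> / 2)) \<longlonglongrightarrow> sinc 0"
      by (intro isCont_tendsto_compose[OF isCont_sinc]) simp
    then have "(\<lambda>j. (Y \<omega> ^ 2 * (sinc (sj j * Y \<omega> / 2))^2) ^ m) \<longlonglongrightarrow> (Y \<omega> ^ 2 * 1 ^ 2) ^ m"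
      by (intro tendsto_intros) simp
    moreover have "f j \<omega> = ennreal ((Y \<omega> ^ 2 * (sinc (sj j * Y \<omega> / 2))^2) ^ m)" for j
      unfolding f_def using cos_sinc[of "sj j" "Y \<omega>"] sj_pos[of j] by simp
    ultimately show ?thesis by (simp add: power_mult)
  qed
  have intf: "integral\<^sup>N M (f j) \<le> ennreal (c + C * sj j)" for j
  proof -
    have int: "integrable M (\<lambda>\<omega>. (2 - 2*cos (sj j * Y \<omega>))^m)"
      using int_cos_power(1)[OF M Y H] .
    have eqi: "(\<integral>\<omega>. (2 - 2*cos (sj j * Y \<omega>))^m \<partial>M) = norm (cdiff F m (sj j))"
      using int_cos_power(2)[OF M Y H] .
    have "integral\<^sup>N M (f j) = (\<integral>\<^sup>+\<omega>. ennreal ((2 - 2*cos (sj j * Y \<omega>))^m / sj j ^ (2*m)) \<partial>M)"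
      unfolding f_def by (intro nn_integral_cong) (simp add: power_divide power_mult[symmetric] mult.commute)
    also have "\<dots> = ennreal ((\<integral>\<omega>. (2 - 2*cos (sj j * Y \<omega>))^m \<partial>M) / sj j ^ (2*m))"
    proof (subst nn_integral_eq_integral)
      show "integrable M (\<lambda>\<omega>. (2 - 2*cos (sj j * Y \<omega>))^m / sj j ^ (2*m))"
        using int by simp
      show "AE \<omega> in M. 0 \<le> (2 - 2*cos (sj j * Y \<omega>))^m / sj j ^ (2*m)"
        using cos_le_one by (intro AE_I2 divide_nonneg_nonneg zero_le_power) (auto simp: sj_pos less_imp_le)
    qed simp
    also have "\<dots> = ennreal (norm (cdiff F m (sj j)) / sj j ^ (2*m))" by (simp add: eqi)
    also have "\<dots> \<le> ennreal (c + C * sj j)"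
    proof (rule ennreal_leI)
      have cb: "norm (cdiff F m (sj j) - tc F (2*m) * fact (2*m) * of_real (sj j) ^ (2*m))
         \<le> 4^m * 2 * B1 * (real m * \<bar>sj j\<bar>)^(2*m+1)"
        by (rule cdiff_bound[OF F B1 sj_small])
      have tb: "norm (tc F (2*m)) \<le> B / r^(2*m)" by (rule entire_coeff_bound[OF F r Br])
      have "norm (cdiff F m (sj j)) \<le> norm (tc F (2*m) * fact (2*m) * of_real (sj j) ^ (2*m))
           + 4^m * 2 * B1 * (real m * \<bar>sj j\<bar>)^(2*m+1)"
        using cb norm_triangle_ineq2[of "cdiff F m (sj j)" "tc F (2*m) * fact (2*m) * of_real (sj j) ^ (2*m)"]
        by linarith
      also have "\<dots> \<le> (B / r^(2*m)) * fact (2*m) * sj j ^ (2*m) + C * sj j * sj j ^ (2*m)"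
      proof (rule add_mono)
        show "norm (tc F (2*m) * fact (2*m) * of_real (sj j) ^ (2*m)) \<le> (B / r^(2*m)) * fact (2*m) * sj j ^ (2*m)"
        proof -
          have "norm (tc F (2*m) * fact (2*m) * of_real (sj j) ^ (2*m)) = norm (tc F (2*m)) * (fact (2*m) * sj j ^ (2*m))"
            using sj_pos[of j] by (simp add: norm_mult norm_power)
          also have "\<dots> \<le> (B / r^(2*m)) * (fact (2*m) * sj j ^ (2*m))"
            by (rule mult_right_mono[OF tb]) (use sj_pos[of j] in simp)
          finally show ?thesis by (simp add: mult_ac)
        qed
        show "4^m * 2 * B1 * (real m * \<bar>sj j\<bar>)^(2*m+1) \<le> C * sj j * sj j ^ (2*m)"
          using sj_pos[of j] by (simp add: C_def power_mult_distrib)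
      qed
      finally have "norm (cdiff F m (sj j)) \<le> (c + C * sj j) * sj j ^ (2*m)"
        by (simp add: c_def algebra_simps)
      then show "norm (cdiff F m (sj j)) / sj j ^ (2*m) \<le> c + C * sj j"
        using sj_pos[of j] by (simp add: divide_le_eq)
    qed
    finally show ?thesis .
  qed
  have "(\<integral>\<^sup>+\<omega>. ennreal (Y \<omega> ^ (2*m)) \<partial>M) = (\<integral>\<^sup>+\<omega>. liminf (\<lambda>j. f j \<omega>) \<partial>M)"
    by (intro nn_integral_cong) (simp add: lim_imp_Liminf[OF _ ptw])
  also have "\<dots> \<le> liminf (\<lambda>j. integral\<^sup>N M (f j))"
    by (rule nn_integral_liminf) (simp add: f_def)
  also have "\<dots> \<le> liminf (\<lambda>j. ennreal (c + C * sj j))"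
    by (intro Liminf_mono) (simp add: intf)
  also have "\<dots> = ennreal c"
  proof (rule lim_imp_Liminf)
    have "(\<lambda>j. c + C * sj j) \<longlonglongrightarrow> c + C * 0" by (intro tendsto_intros sj_lim)
    then show "(\<lambda>j. ennreal (c + C * sj j)) \<longlonglongrightarrow> ennreal c" by (intro tendsto_ennrealI) simp
  qed simp
  finally show ?thesis by (simp add: c_def)
qed



lemma exp_moment_bound:
  assumes M: "prob_space M" and Y[measurable]: "Y \<in> borel_measurable M"
    and H: "\<And>s::real. (\<integral>\<omega>. exp (\<i> * of_real (s * Y \<omega>)) \<partial>M) = F (of_real s)"
    and F: "F holomorphic_on UNIV" and B1: "\<And>z. norm z = 1 \<Longrightarrow> norm (F z) \<le> B1"
    and r: "r > 0" and Br: "\<And>z. norm z = r \<Longrightarrow> norm (F z) \<le> B"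
    and th: "0 < \<theta>" "\<theta> < r"
  shows "(\<integral>\<^sup>+\<omega>. ennreal (exp (\<theta> * Y \<omega>)) \<partial>M) \<le> ennreal (2 * B / (1 - \<theta> / r))"
proof -
  have B0: "0 \<le> B" using Br[of "of_real r"] r by (smt (verit) norm_ge_zero norm_of_real)
  define a where "a n \<omega> = (if even n then (\<theta> * Y \<omega>)^n / fact n else 0)" for n \<omega>
  have a_nn: "0 \<le> a n \<omega>" for n \<omega> unfolding a_def by (auto simp: zero_le_even_power)
  have a_sums: "(\<lambda>n. a n \<omega>) sums cosh (\<theta> * Y \<omega>)" for \<omega>
  proof -
    have "(\<lambda>n. if even n then (\<theta> * Y \<omega>) ^ n /\<^sub>R fact n else 0) = (\<lambda>n. a n \<omega>)"
      unfolding a_def by (intro ext) (simp add: divide_inverse_commute)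
    then show ?thesis using cosh_converges[of "\<theta> * Y \<omega>"] by simp
  qed
  have q: "0 \<le> \<theta> / r" "\<theta> / r < 1" using th r by auto
  have G: "(\<lambda>n. 2 * B * (\<theta> / r)^n) sums (2 * B * (1 / (1 - \<theta> / r)))"
    by (intro sums_mult geometric_sums) (use q in auto)
  have each: "integral\<^sup>N M (\<lambda>\<omega>. ennreal (2 * a n \<omega>)) \<le> ennreal (2 * B * (\<theta> / r)^n)" for n
  proof (cases "even n")
    case True
    then obtain m where n: "n = 2*m" by blast
    have "integral\<^sup>N M (\<lambda>\<omega>. ennreal (2 * a n \<omega>)) = (\<integral>\<^sup>+\<omega>. ennreal (2 * \<theta>^n / fact n) * ennreal (Y \<omega> ^ (2*m)) \<partial>M)"
      unfolding a_def using True n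
      by (intro nn_integral_cong) (simp add: ennreal_mult[symmetric] power_mult_distrib zero_le_even_power)
    also have "\<dots> = ennreal (2 * \<theta>^n / fact n) * (\<integral>\<^sup>+\<omega>. ennreal (Y \<omega> ^ (2*m)) \<partial>M)"
      by (rule nn_integral_cmult) simp
    also have "\<dots> \<le> ennreal (2 * \<theta>^n / fact n) * ennreal (fact (2*m) * B / r^(2*m))"
    proof (rule mult_left_mono)
      show "(\<integral>\<^sup>+\<omega>. ennreal (Y \<omega> ^ (2*m)) \<partial>M) \<le> ennreal (fact (2*m) * B / r^(2*m))"
        apply (rule moment_bound[OF M Y H F _ r])
         apply (rule B1, assumption)
        apply (rule Br, assumption)
        done
    qed (rule zero_le)
    also have "\<dots> = ennreal (2 * B * (\<theta> / r)^n)"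
      using th B0 n by (simp add: ennreal_mult[symmetric] power_divide field_simps)
    finally show ?thesis .
  next
    case False
    then show ?thesis unfolding a_def by simp
  qed
  have "(\<integral>\<^sup>+\<omega>. ennreal (exp (\<theta> * Y \<omega>)) \<partial>M) \<le> (\<integral>\<^sup>+\<omega>. ennreal (2 * cosh (\<theta> * Y \<omega>)) \<partial>M)"
  proof (intro nn_integral_mono ennreal_leI)
    fix \<omega>
    show "exp (\<theta> * Y \<omega>) \<le> 2 * cosh (\<theta> * Y \<omega>)"
      unfolding cosh_def by (simp add: add_increasing2)
  qed
  also have "\<dots> = (\<integral>\<^sup>+\<omega>. (\<Sum>n. ennreal (2 * a n \<omega>)) \<partial>M)"
  proof (intro nn_integral_cong)
    fix \<omega>
    have "(\<lambda>n. 2 * a n \<omega>) sums (2 * cosh (\<theta> * Y \<omega>))" by (intro sums_mult a_sums)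
    then have s1: "summable (\<lambda>n. 2 * a n \<omega>)" and s2: "(\<Sum>n. 2 * a n \<omega>) = 2 * cosh (\<theta> * Y \<omega>)"
      by (simp_all add: sums_iff)
    have "(\<Sum>n. ennreal (2 * a n \<omega>)) = ennreal (\<Sum>n. 2 * a n \<omega>)"
      by (rule suminf_ennreal2) (use a_nn s1 in auto)
    then show "ennreal (2 * cosh (\<theta> * Y \<omega>)) = (\<Sum>n. ennreal (2 * a n \<omega>))"
      using s2 by simp
  qed
  also have "\<dots> = (\<Sum>n. integral\<^sup>N M (\<lambda>\<omega>. ennreal (2 * a n \<omega>)))"
    by (rule nn_integral_suminf) (simp add: a_def)
  also have "\<dots> \<le> (\<Sum>n. ennreal (2 * B * (\<theta> / r)^n))"
    by (rule suminf_le) (use each in auto)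
  also have "\<dots> = ennreal (2 * B * (1 / (1 - \<theta> / r)))"
  proof -
    have s1: "summable (\<lambda>n. 2 * B * (\<theta> / r)^n)" and s2: "(\<Sum>n. 2 * B * (\<theta> / r)^n) = 2 * B * (1 / (1 - \<theta> / r))"
      using G by (simp_all add: sums_iff)
    have "(\<Sum>n. ennreal (2 * B * (\<theta> / r)^n)) = ennreal (\<Sum>n. 2 * B * (\<theta> / r)^n)"
      by (rule suminf_ennreal2) (use B0 q s1 in auto)
    then show ?thesis using s2 by simp
  qed
  finally show ?thesis by simp
qed

lemma chernoff:
  assumes M: "prob_space M" and Y[measurable]: "Y \<in> borel_measurable M" and th: "\<theta> > 0" and K0: "0 \<le> K"
    and K: "(\<integral>\<^sup>+\<omega>. ennreal (exp (\<theta> * Y \<omega>)) \<partial>M) \<le> ennreal K"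
  shows "measure M {\<omega> \<in> space M. Y \<omega> > a} \<le> exp (- \<theta> * a) * K"
proof -
  interpret prob_space M by (rule M)
  have "emeasure M {\<omega> \<in> space M. Y \<omega> > a} = (\<integral>\<^sup>+\<omega>. indicator {\<omega> \<in> space M. Y \<omega> > a} \<omega> \<partial>M)"
    by (rule nn_integral_indicator[symmetric]) simp
  also have "\<dots> \<le> (\<integral>\<^sup>+\<omega>. ennreal (exp (- \<theta> * a)) * ennreal (exp (\<theta> * Y \<omega>)) \<partial>M)"
  proof (intro nn_integral_mono)
    fix \<omega> assume "\<omega> \<in> space M"
    show "indicator {\<omega> \<in> space M. Y \<omega> > a} \<omega> \<le> ennreal (exp (- \<theta> * a)) * ennreal (exp (\<theta> * Y \<omega>))"
    proof (cases "Y \<omega> > a")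
      case True
      have "1 \<le> exp (- \<theta> * a) * exp (\<theta> * Y \<omega>)"
        using True th by (simp add: exp_add[symmetric] algebra_simps)
      then show ?thesis using True \<open>\<omega> \<in> space M\<close> by (simp add: ennreal_mult[symmetric])
    qed simp
  qed
  also have "\<dots> = ennreal (exp (- \<theta> * a)) * (\<integral>\<^sup>+\<omega>. ennreal (exp (\<theta> * Y \<omega>)) \<partial>M)"
    by (rule nn_integral_cmult) simp
  also have "\<dots> \<le> ennreal (exp (- \<theta> * a)) * ennreal K"
    by (intro mult_left_mono K) simp
  finally have "ennreal (measure M {\<omega> \<in> space M. Y \<omega> > a}) \<le> ennreal (exp (- \<theta> * a) * K)"
    by (simp add: emeasure_eq_measure ennreal_mult'[symmetric] ennreal_mult[symmetric])
  then show ?thesis using K0 by (subst (asm) ennreal_le_iff) simp_all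
qed



definition mfun :: "real^'n \<Rightarrow> real" where "mfun y = min 1 (norm y ^ 2)"

definition cf :: "nat \<Rightarrow> real^'n \<Rightarrow> real" where
  "cf k y = (if k = 0 then 0 else if k = 1 then 1 - indicator (cball 0 1) y else 1)"

definition lint :: "real^'n \<Rightarrow> complex \<Rightarrow> real^'n \<Rightarrow> complex" where
  "lint u z y = exp (\<i> * (z * of_real (u \<bullet> y))) - 1 - \<i> * (z * of_real (u \<bullet> y)) * of_real (indicator (cball 0 1) y)"

lemma lint_sums:
  "(\<lambda>k. ((\<i> * of_real (u \<bullet> y))^k / fact k * of_real (cf k y)) * z^k) sums lint u z y"
proof -
  define \<zeta> where "\<zeta> = \<i> * (z * of_real (u \<bullet> y))"
  define e where "e k = \<zeta>^k /\<^sub>R fact k" for k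
  have E: "e sums exp \<zeta>" unfolding e_def by (rule exp_converges)
  have S0: "(\<lambda>k. if k = 0 then e 0 else 0) sums e 0" by (rule sums_single)
  have S1: "(\<lambda>k. if k = 1 then e 1 * of_real (indicator (cball 0 1) y) else 0) sums (e 1 * of_real (indicator (cball 0 1) y))"
    by (rule sums_single)
  have "(\<lambda>k. e k - (if k = 0 then e 0 else 0) - (if k = 1 then e 1 * of_real (indicator (cball 0 1) y) else 0))
     sums (exp \<zeta> - e 0 - e 1 * of_real (indicator (cball 0 1) y))"
    by (intro sums_diff E S0 S1)
  moreover have "exp \<zeta> - e 0 - e 1 * of_real (indicator (cball 0 1) y) = lint u z y"
    unfolding lint_def \<zeta>_def e_def by simp
  moreover have "e k - (if k = 0 then e 0 else 0) - (if k = 1 then e 1 * of_real (indicator (cball 0 1) y) else 0)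
     = ((\<i> * of_real (u \<bullet> y))^k / fact k * of_real (cf k y)) * z^k" for k
    unfolding e_def \<zeta>_def cf_def
    by (cases "k = 0"; cases "k = 1") (simp_all add: power_mult_distrib scaleR_conv_of_real field_simps)
  ultimately show ?thesis by simp
qed

lemma lint_term_bound:
  fixes u y :: "real^'n"
  assumes u: "norm u = 1" and h: "h \<ge> 1" and y: "y \<in> cball 0 h"
  shows "norm (((\<i> * of_real (u \<bullet> y))^k / fact k * of_real (cf k y)) * z^k) \<le> (h * norm z)^k / fact k * mfun y"
proof -
  have w: "\<bar>u \<bullet> y\<bar> \<le> norm y" using Cauchy_Schwarz_ineq2[of u y] u by simp
  have ny: "norm y \<le> h" using y by simp
  have lhs: "norm (((\<i> * of_real (u \<bullet> y))^k / fact k * of_real (cf k y)) * z^k)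
      = \<bar>u \<bullet> y\<bar>^k * norm z ^ k / fact k * \<bar>cf k y\<bar>"
    by (simp add: norm_mult norm_power norm_divide)
  have key: "\<bar>u \<bullet> y\<bar>^k * \<bar>cf k y\<bar> \<le> h^k * mfun y"
  proof (cases "k = 0")
    case True then show ?thesis by (simp add: cf_def mfun_def)
  next
    case k0: False
    show ?thesis
    proof (cases "norm y \<le> 1")
      case True
      then have "\<bar>cf k y\<bar> \<le> (if k = 1 then 0 else 1)" using k0 by (simp add: cf_def)
      show ?thesis
      proof (cases "k = 1")
        case True
        with \<open>norm y \<le> 1\<close> h show ?thesis by (simp add: cf_def mfun_def)
      next
        case False
        with k0 have k2: "k \<ge> 2" by simp
        have "\<bar>u \<bullet> y\<bar>^k \<le> norm y ^ k" using w by (intro power_mono) auto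
        also have "\<dots> \<le> norm y ^ 2" using True k2 by (intro power_decreasing) auto
        also have "\<dots> = mfun y"
        proof -
          have "norm y ^ 2 \<le> 1" using True by (intro power_le_one) auto
          then show ?thesis unfolding mfun_def by simp
        qed
        also have "\<dots> \<le> h^k * mfun y"
        proof -
          have "1 \<le> h^k" using h by (simp add: one_le_power)
          moreover have "0 \<le> mfun y" by (simp add: mfun_def)
          ultimately show ?thesis by (metis mult_le_cancel_right1 order_less_le not_le mult_right_mono mult_1)
        qed
        finally show ?thesis using False k0 by (simp add: cf_def)
      qed
    next
      case False
      then have m1: "mfun y = 1" unfolding mfun_def
        by (simp add: min_def)
      have c: "\<bar>cf k y\<bar> \<le> 1" using False by (auto simp: cf_def)
      have "\<bar>u \<bullet> y\<bar>^k \<le> h^k" using w ny by (intro power_mono) auto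
      then have "\<bar>u \<bullet> y\<bar>^k * \<bar>cf k y\<bar> \<le> h^k * 1"
        using c h by (intro mult_mono) auto
      then show ?thesis using m1 by simp
    qed
  qed
  have "\<bar>u \<bullet> y\<bar>^k * norm z ^ k / fact k * \<bar>cf k y\<bar> = (\<bar>u \<bullet> y\<bar>^k * \<bar>cf k y\<bar>) * (norm z ^ k / fact k)"
    by simp
  also have "\<dots> \<le> (h^k * mfun y) * (norm z ^ k / fact k)"
    by (rule mult_right_mono[OF key]) simp
  also have "\<dots> = (h * norm z)^k / fact k * mfun y" by (simp add: power_mult_distrib)
  finally show ?thesis using lhs by simp
qed



lemma exp_sums_real: "(\<lambda>k. x^k / fact k) sums exp (x::real)"
proof -
  have "(\<lambda>k. x^k /\<^sub>R fact k) = (\<lambda>k. x^k / fact k)" by (intro ext) (simp add: divide_inverse_commute)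
  then show ?thesis using exp_converges[of x] by simp
qed

lemma mfun_integrable:
  assumes L: "levy_measure nu"
  shows "integrable nu mfun"
proof -
  have s: "sets nu = sets borel" using L by (simp add: levy_measure_def)
  have mb: "mfun \<in> borel_measurable nu"
    unfolding mfun_def measurable_cong_sets[OF s refl] by measurable
  show ?thesis
  proof (rule integrableI_bounded[OF mb])
    have "(\<integral>\<^sup>+ y. ennreal (norm (mfun y)) \<partial>nu) = (\<integral>\<^sup>+ y. ennreal (min 1 ((norm y)\<^sup>2)) \<partial>nu)"
      by (intro nn_integral_cong) (simp add: mfun_def)
    also have "\<dots> < \<infinity>" using L by (simp add: levy_measure_def)
    finally show "(\<integral>\<^sup>+ y. ennreal (norm (mfun y)) \<partial>nu) < \<infinity>" .
  qed
qed

lemma cball_borel[measurable]: "cball (0::real^'n) r \<in> sets borel"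
  by (simp add: borel_closed)

lemma cf_meas[measurable]: "cf k \<in> borel_measurable borel"
  unfolding cf_def by (cases "k = 0"; cases "k = 1") simp_all

lemma lint_integral:
  fixes nu :: "(real^'n) measure" and u :: "real^'n"
  assumes L: "levy_measure nu" and u: "norm u = 1" and h: "h \<ge> 1"
  shows "(\<lambda>k. (\<integral>y. of_real (indicator (cball 0 h) y) * ((\<i> * of_real (u \<bullet> y))^k / fact k * of_real (cf k y)) \<partial>nu) * z^k)
           sums integral\<^sup>L (density nu (indicator (cball 0 h))) (lint u z)"
    and "norm (integral\<^sup>L (density nu (indicator (cball 0 h))) (lint u z)) \<le> exp (h * norm z) * (\<integral>y. mfun y \<partial>nu)"
proof -
  have s: "sets nu = sets borel" using L by (simp add: levy_measure_def)
  define g where "g k (y::real^'n) = (\<i> * of_real (u \<bullet> y))^k / fact k * of_real (cf k y)" for k y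
  define f where "f k (y::real^'n) = of_real (indicator (cball 0 h) y) * (g k y * z^k)" for k y
  define b where "b k (y::real^'n) = (h * norm z)^k / fact k * mfun y" for k y
  define V where "V = (\<integral>y. mfun y \<partial>nu)"
  have mint: "integrable nu mfun" by (rule mfun_integrable[OF L])
  have mnn: "0 \<le> mfun y" for y by (simp add: mfun_def)
  have V0: "0 \<le> V" unfolding V_def by (rule integral_nonneg_AE) (simp add: mnn)
  have fmeas: "f k \<in> borel_measurable nu" for k
    unfolding f_def g_def measurable_cong_sets[OF s refl] by measurable
  have bnd: "norm (f k y) \<le> b k y" for k y
  proof (cases "y \<in> cball 0 h")
    case True
    then show ?thesis unfolding f_def b_def g_def
      using lint_term_bound[OF u h True, of k z] by (simp add: mult.assoc)
  next
    case False
    then show ?thesis unfolding f_def b_def using mnn[of y] h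
      by (auto intro!: divide_nonneg_nonneg mult_nonneg_nonneg zero_le_power)
  qed
  have bint: "integrable nu (b k)" for k unfolding b_def using mint by simp
  have bI: "(\<integral>y. b k y \<partial>nu) = (h * norm z)^k / fact k * V" for k unfolding b_def V_def by simp
  have fint: "integrable nu (f k)" for k
    by (rule Bochner_Integration.integrable_bound[OF bint[of k] fmeas]) (use bnd in \<open>auto intro!: AE_I2 order_trans[OF _ abs_ge_self]\<close>)
  have expS: "(\<lambda>k. (h * norm z)^k / fact k * c) sums (exp (h * norm z) * c)" for c
    by (intro sums_mult2 exp_sums_real)
  have sumn: "summable (\<lambda>k. norm (f k y))" for y
    by (rule summable_comparison_test'[OF sums_summable[OF expS[of "mfun y"]]]) (use bnd in \<open>simp add: b_def\<close>)
  have intnorm: "(\<integral>y. norm (f k y) \<partial>nu) \<le> (h * norm z)^k / fact k * V" for k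
  proof -
    have "(\<integral>y. norm (f k y) \<partial>nu) \<le> (\<integral>y. b k y \<partial>nu)"
      by (intro integral_mono bint) (use fint bnd in auto)
    then show ?thesis using bI by simp
  qed
  have sumi: "summable (\<lambda>k. (\<integral>y. norm (f k y) \<partial>nu))"
    by (rule summable_comparison_test'[OF sums_summable[OF expS[of V]]]) (use intnorm in simp)
  have SI: "(\<lambda>k. integral\<^sup>L nu (f k)) sums (\<integral>y. (\<Sum>k. f k y) \<partial>nu)"
    by (rule sums_integral[OF fint _ sumi]) (use sumn in simp)
  have pt: "(\<Sum>k. f k y) = of_real (indicator (cball 0 h) y) * lint u z y" for y
  proof -
    have "(\<lambda>k. of_real (indicator (cball 0 h) y) * (g k y * z^k)) sums (of_real (indicator (cball 0 h) y) * lint u z y)"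
      by (intro sums_mult) (unfold g_def, rule lint_sums)
    then show ?thesis unfolding f_def by (simp add: sums_iff)
  qed
  have dens: "density nu (indicator (cball 0 h)) = density nu (\<lambda>y. ennreal (indicator (cball 0 h) y))"
    by (simp add: ennreal_indicator)
  have lmeas: "lint u z \<in> borel_measurable nu"
    unfolding lint_def measurable_cong_sets[OF s refl] by measurable
  have J: "integral\<^sup>L (density nu (indicator (cball 0 h))) (lint u z) = (\<integral>y. (\<Sum>k. f k y) \<partial>nu)"
    unfolding dens pt
    by (subst integral_density) (use lmeas s in \<open>auto simp: scaleR_conv_of_real measurable_cong_sets[OF s refl]\<close>)
  have fk: "integral\<^sup>L nu (f k) = (\<integral>y. of_real (indicator (cball 0 h) y) * g k y \<partial>nu) * z^k" for k
    unfolding f_def by (simp add: mult.assoc[symmetric])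
  show "(\<lambda>k. (\<integral>y. of_real (indicator (cball 0 h) y) * ((\<i> * of_real (u \<bullet> y))^k / fact k * of_real (cf k y)) \<partial>nu) * z^k)
           sums integral\<^sup>L (density nu (indicator (cball 0 h))) (lint u z)"
    using SI unfolding J fk g_def .
  have nI: "norm (integral\<^sup>L nu (f k)) \<le> (h * norm z)^k / fact k * V" for k
    using integral_norm_bound[of nu "f k"] intnorm[of k] by linarith
  have sn: "summable (\<lambda>k. norm (integral\<^sup>L nu (f k)))"
    by (rule summable_comparison_test'[OF sums_summable[OF expS[of V]]]) (use nI in simp)
  have "norm (integral\<^sup>L (density nu (indicator (cball 0 h))) (lint u z)) = norm (\<Sum>k. integral\<^sup>L nu (f k))"
    using SI J by (simp add: sums_iff)
  also have "\<dots> \<le> (\<Sum>k. norm (integral\<^sup>L nu (f k)))" by (rule summable_norm[OF sn])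
  also have "\<dots> \<le> (\<Sum>k. (h * norm z)^k / fact k * V)"
    by (rule suminf_le[OF nI sn sums_summable[OF expS[of V]]])
  also have "\<dots> = exp (h * norm z) * V" using expS[of V] by (simp add: sums_iff)
  finally show "norm (integral\<^sup>L (density nu (indicator (cball 0 h))) (lint u z)) \<le> exp (h * norm z) * (\<integral>y. mfun y \<partial>nu)"
    by (simp add: V_def)
qed



definition Phi :: "real^'n^'n \<Rightarrow> real^'n \<Rightarrow> (real^'n) measure \<Rightarrow> real \<Rightarrow> real^'n \<Rightarrow> complex \<Rightarrow> complex" where
  "Phi S G nu h u z = - (z^2 * of_real ((u \<bullet> (S *v u)) / 2)) + \<i> * z * of_real (u \<bullet> G)
     + integral\<^sup>L (density nu (indicator (cball 0 h))) (lint u z)"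

definition Psi :: "real^'n^'n \<Rightarrow> real^'n \<Rightarrow> (real^'n) measure \<Rightarrow> real \<Rightarrow> real^'n \<Rightarrow> real \<Rightarrow> real" where
  "Psi S G nu h u r = r^2 * \<bar>u \<bullet> (S *v u)\<bar> + r * \<bar>u \<bullet> G\<bar> + exp (h * r) * (\<integral>y. mfun y \<partial>nu)"

lemma J_holo:
  fixes nu :: "(real^'n) measure" and u :: "real^'n"
  assumes L: "levy_measure nu" and u: "norm u = 1" and h: "h \<ge> 1"
  shows "(\<lambda>z. integral\<^sup>L (density nu (indicator (cball 0 h))) (lint u z)) holomorphic_on UNIV"
proof -
  define J where "J z = integral\<^sup>L (density nu (indicator (cball 0 h))) (lint u z)" for z
  define a where "a k = (\<integral>y. of_real (indicator (cball 0 h) y) * ((\<i> * of_real (u \<bullet> y))^k / fact k * of_real (cf k y)) \<partial>nu)" for k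
  have S: "(\<lambda>k. a k * z^k) sums J z" for z
    unfolding a_def J_def by (rule lint_integral(1)[OF L u h])
  have hb: "J holomorphic_on ball 0 R" for R
    by (rule power_series_holomorphic[where a = a]) (use S in simp)
  have "\<forall>x\<in>UNIV. \<exists>f'. (J has_field_derivative f') (at x)"
  proof
    fix x :: complex
    have "J holomorphic_on ball 0 (norm x + 1)" by (rule hb)
    then show "\<exists>f'. (J has_field_derivative f') (at x)"
      using holomorphic_on_open[of "ball 0 (norm x + 1)" J] by auto
  qed
  then have "J holomorphic_on UNIV" using holomorphic_on_open[of UNIV J] by simp
  then show ?thesis unfolding J_def .
qed

lemma Phi_holo:
  fixes nu :: "(real^'n) measure" and u :: "real^'n"
  assumes L: "levy_measure nu" and u: "norm u = 1" and h: "h \<ge> 1"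
  shows "Phi S G nu h u holomorphic_on UNIV"
proof -
  have J: "(\<lambda>z. integral\<^sup>L (density nu (indicator (cball 0 h))) (lint u z)) holomorphic_on UNIV"
    by (rule J_holo[OF L u h])
  show ?thesis unfolding Phi_def[abs_def]
    by (intro holomorphic_intros J)
qed

lemma Phi_bound:
  fixes nu :: "(real^'n) measure" and u :: "real^'n"
  assumes L: "levy_measure nu" and u: "norm u = 1" and h: "h \<ge> 1"
  shows "norm (Phi S G nu h u z) \<le> Psi S G nu h u (norm z)"
proof -
  have J: "norm (integral\<^sup>L (density nu (indicator (cball 0 h))) (lint u z)) \<le> exp (h * norm z) * (\<integral>y. mfun y \<partial>nu)"
    by (rule lint_integral(2)[OF L u h])
  have 1: "norm (- (z^2 * of_real ((u \<bullet> (S *v u)) / 2))) \<le> norm z ^ 2 * \<bar>u \<bullet> (S *v u)\<bar>"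
    by (simp add: norm_mult norm_power mult_left_mono)
  have 2: "norm (\<i> * z * of_real (u \<bullet> G)) = norm z * \<bar>u \<bullet> G\<bar>"
    by (simp add: norm_mult)
  have "norm (Phi S G nu h u z) \<le> norm (- (z^2 * of_real ((u \<bullet> (S *v u)) / 2))) + norm (\<i> * z * of_real (u \<bullet> G))
     + norm (integral\<^sup>L (density nu (indicator (cball 0 h))) (lint u z))"
    unfolding Phi_def by (meson norm_triangle_le norm_triangle_ineq add_mono order_trans order_refl)
  then show ?thesis using 1 2 J unfolding Psi_def by linarith
qed

lemma levy_exponent_Phi:
  "levy_exponent S (density nu (indicator (cball 0 h))) G (s *\<^sub>R u) = Phi S G nu h u (of_real s)"
proof -
  have i: "(\<lambda>y. exp (\<i> * complex_of_real ((s *\<^sub>R u) \<bullet> y)) - 1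
          - \<i> * complex_of_real ((s *\<^sub>R u) \<bullet> y) * complex_of_real (indicator (cball 0 1) y)) = lint u (of_real s)"
    unfolding lint_def by (intro ext) simp
  show ?thesis
    unfolding levy_exponent_def Phi_def i
    by (simp add: matrix_vector_mult_scaleR power2_eq_square)
qed



lemma dir_tail:
  fixes M :: "'a measure" and X :: "real \<Rightarrow> 'a \<Rightarrow> real^'n" and nu :: "(real^'n) measure" and u :: "real^'n"
  assumes LP: "levy_process M X S (density nu (indicator (cball 0 h))) G"
    and L: "levy_measure nu" and h: "h \<ge> 1" and u: "norm u = 1" and t: "t > 0"
    and r: "r > 0" and th: "0 < \<theta>" "\<theta> < r"
  shows "measure M {\<omega> \<in> space M. u \<bullet> X t \<omega> > a}
           \<le> exp (- \<theta> * a) * (2 * exp (t * Psi S G nu h u r) / (1 - \<theta> / r))"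
proof -
  have M: "prob_space M" using LP by (simp add: levy_process_def)
  have Xm[measurable]: "X t \<in> borel_measurable M" using LP t by (simp add: levy_process_def)
  have ch: "\<And>l. integral\<^sup>L M (\<lambda>\<omega>. exp (\<i> * complex_of_real (l \<bullet> X t \<omega>)))
                   = exp (complex_of_real t * levy_exponent S (density nu (indicator (cball 0 h))) G l)"
    using LP t by (simp add: levy_process_def)
  define Y where "Y \<omega> = u \<bullet> X t \<omega>" for \<omega>
  have Ym[measurable]: "Y \<in> borel_measurable M" unfolding Y_def by measurable
  define F where "F z = exp (of_real t * Phi S G nu h u z)" for z
  have Fh: "F holomorphic_on UNIV" unfolding F_def[abs_def]
    using Phi_holo[OF L u h] by (intro holomorphic_intros) auto
  have H: "(\<integral>\<omega>. exp (\<i> * of_real (s * Y \<omega>)) \<partial>M) = F (of_real s)" for s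
  proof -
    have "(\<integral>\<omega>. exp (\<i> * of_real (s * Y \<omega>)) \<partial>M) = integral\<^sup>L M (\<lambda>\<omega>. exp (\<i> * complex_of_real ((s *\<^sub>R u) \<bullet> X t \<omega>)))"
      unfolding Y_def by simp
    also have "\<dots> = F (of_real s)" unfolding ch F_def levy_exponent_Phi ..
    finally show ?thesis .
  qed
  have Fb: "norm (F z) \<le> exp (t * Psi S G nu h u (norm z))" for z
  proof -
    have "norm (F z) = exp (t * Re (Phi S G nu h u z))" unfolding F_def by simp
    also have "\<dots> \<le> exp (t * Psi S G nu h u (norm z))"
    proof -
      have "Re (Phi S G nu h u z) \<le> norm (Phi S G nu h u z)" by (rule complex_Re_le_cmod)
      also have "\<dots> \<le> Psi S G nu h u (norm z)" by (rule Phi_bound[OF L u h])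
      finally show ?thesis using t by simp
    qed
    finally show ?thesis .
  qed
  have K: "(\<integral>\<^sup>+\<omega>. ennreal (exp (\<theta> * Y \<omega>)) \<partial>M) \<le> ennreal (2 * exp (t * Psi S G nu h u r) / (1 - \<theta> / r))"
  proof (rule exp_moment_bound[OF M Ym H Fh _ r _ th])
    show "norm (F z) \<le> exp (t * Psi S G nu h u 1)" if "norm z = 1" for z using Fb[of z] that by simp
    show "norm (F z) \<le> exp (t * Psi S G nu h u r)" if "norm z = r" for z using Fb[of z] that by simp
  qed
  have K0: "0 \<le> 2 * exp (t * Psi S G nu h u r) / (1 - \<theta> / r)" using th r by simp
  show ?thesis using chernoff[OF M Ym th(1) K0 K, of a] unfolding Y_def by simp
qed



lemma sphere_net:
  assumes e: "0 < \<epsilon>"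
  obtains N :: "(real^'n) set" where "finite N" "N \<subseteq> sphere 0 1" "N \<noteq> {}"
    "\<And>x. \<exists>u\<in>N. u \<bullet> x \<ge> (1 - \<epsilon>) * norm x"
proof -
  have cover: "sphere (0::real^'n) 1 \<subseteq> (\<Union>c\<in>sphere 0 1. ball c \<epsilon>)" using e by force
  have op: "\<And>T. T \<in> sphere (0::real^'n) 1 \<Longrightarrow> open (ball T \<epsilon>)" by simp
  obtain C where C: "C \<subseteq> sphere (0::real^'n) 1" "finite C" "sphere 0 1 \<subseteq> (\<Union>c\<in>C. ball c \<epsilon>)"
    by (rule compactE_image[OF compact_sphere op cover])
  obtain v :: "real^'n" where v: "norm v = 1" using vector_choose_size[of 1] by auto
  have ne: "C \<noteq> {}" using C(3) v by auto
  have cov: "\<exists>u\<in>C. u \<bullet> x \<ge> (1 - \<epsilon>) * norm x" for x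
  proof (cases "x = 0")
    case True then show ?thesis using ne by auto
  next
    case False
    define x1 where "x1 = x /\<^sub>R norm x"
    have "x1 \<in> sphere 0 1" using False by (simp add: x1_def)
    then obtain u where u: "u \<in> C" "dist u x1 < \<epsilon>" using C(3) by force
    have e1: "u \<bullet> x = x1 \<bullet> x + (u - x1) \<bullet> x" by (simp add: inner_diff_left)
    have e2: "x1 \<bullet> x = norm x" using False by (simp add: x1_def dot_square_norm power2_eq_square)
    have e3: "(u - x1) \<bullet> x \<ge> - (norm (u - x1) * norm x)"
      using Cauchy_Schwarz_ineq2[of "u - x1" x] by linarith
    have e4: "norm (u - x1) * norm x \<le> \<epsilon> * norm x"
      using u(2) by (intro mult_right_mono) (auto simp: dist_norm)
    have e5: "(1 - \<epsilon>) * norm x = norm x - \<epsilon> * norm x" by (simp add: left_diff_distrib)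
    have "u \<bullet> x \<ge> (1 - \<epsilon>) * norm x" using e1 e2 e3 e4 e5 by linarith
    then show ?thesis using u(1) by blast
  qed
  show ?thesis by (rule that[OF C(2) C(1) ne cov])
qed

lemma tail_union:
  fixes M :: "'a measure" and X :: "real \<Rightarrow> 'a \<Rightarrow> real^'n" and nu :: "(real^'n) measure"
  assumes LP: "levy_process M X S (density nu (indicator (cball 0 h))) G"
    and L: "levy_measure nu" and h: "h \<ge> 1" and t: "t > 0"
    and N: "finite N" "N \<subseteq> sphere 0 1" "\<And>x. \<exists>u\<in>N. u \<bullet> x \<ge> (1 - \<epsilon>) * norm x"
    and e: "0 < \<epsilon>" "\<epsilon> < 1" and r: "r > 0" and th: "0 < \<theta>" "\<theta> < r"
  shows "measure M {\<omega> \<in> space M. norm (X t \<omega>) > \<Lambda>}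
     \<le> (\<Sum>u\<in>N. exp (- \<theta> * ((1 - \<epsilon>) * \<Lambda>)) * (2 * exp (t * Psi S G nu h u r) / (1 - \<theta> / r)))"
proof -
  have M: "prob_space M" using LP by (simp add: levy_process_def)
  interpret prob_space M by (rule M)
  have Xm[measurable]: "X t \<in> borel_measurable M" using LP t by (simp add: levy_process_def)
  have sub: "{\<omega> \<in> space M. norm (X t \<omega>) > \<Lambda>} \<subseteq> (\<Union>u\<in>N. {\<omega> \<in> space M. u \<bullet> X t \<omega> > (1 - \<epsilon>) * \<Lambda>})"
  proof
    fix \<omega> assume w: "\<omega> \<in> {\<omega> \<in> space M. norm (X t \<omega>) > \<Lambda>}"
    obtain u where u: "u \<in> N" "u \<bullet> X t \<omega> \<ge> (1 - \<epsilon>) * norm (X t \<omega>)" using N(3) by blast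
    have "(1 - \<epsilon>) * \<Lambda> < (1 - \<epsilon>) * norm (X t \<omega>)" using w e by (intro mult_strict_left_mono) auto
    then show "\<omega> \<in> (\<Union>u\<in>N. {\<omega> \<in> space M. u \<bullet> X t \<omega> > (1 - \<epsilon>) * \<Lambda>})" using u w by force
  qed
  have "measure M {\<omega> \<in> space M. norm (X t \<omega>) > \<Lambda>} \<le> measure M (\<Union>u\<in>N. {\<omega> \<in> space M. u \<bullet> X t \<omega> > (1 - \<epsilon>) * \<Lambda>})"
    by (rule finite_measure_mono[OF sub], rule sets.finite_UN[OF N(1)]) measurable
  also have "\<dots> \<le> (\<Sum>u\<in>N. measure M {\<omega> \<in> space M. u \<bullet> X t \<omega> > (1 - \<epsilon>) * \<Lambda>})"
    by (rule measure_UNION_le[OF N(1)]) measurable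
  also have "\<dots> \<le> (\<Sum>u\<in>N. exp (- \<theta> * ((1 - \<epsilon>) * \<Lambda>)) * (2 * exp (t * Psi S G nu h u r) / (1 - \<theta> / r)))"
  proof (rule sum_mono)
    fix u assume "u \<in> N"
    then have "norm u = 1" using N(2) by auto
    then show "measure M {\<omega> \<in> space M. u \<bullet> X t \<omega> > (1 - \<epsilon>) * \<Lambda>}
       \<le> exp (- \<theta> * ((1 - \<epsilon>) * \<Lambda>)) * (2 * exp (t * Psi S G nu h u r) / (1 - \<theta> / r))"
      by (rule dir_tail[OF LP L h _ t r th])
  qed
  finally show ?thesis .
qed



lemma Psi_asym:
  fixes t x L eps h Q V q g :: real
  assumes L: "L \<ge> 0" and tp: "t * exp L = x" and t: "t > 0" and e: "0 < eps" "eps < 1" and h: "h \<ge> 1"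
    and Q: "\<bar>q\<bar> \<le> Q" "\<bar>g\<bar> \<le> Q" and V: "V \<ge> 0"
  shows "t * (((1 - eps) * L / h)^2 * \<bar>q\<bar> + ((1 - eps) * L / h) * \<bar>g\<bar> + exp (h * ((1 - eps) * L / h)) * V)
         \<le> (3 * Q + V) * x"
proof -
  define r where "r = (1 - eps) * L / h"
  have h0: "h > 0" using h by simp
  have r0: "0 \<le> r" unfolding r_def using L e h0 by simp
  have hr: "h * r = (1 - eps) * L" unfolding r_def using h0 by simp
  have hrL: "h * r \<le> L" unfolding hr using L e by (simp add: mult_left_le_one_le)
  have rhr: "r \<le> h * r" using r0 h by (simp add: mult_le_cancel_right1)
  have rL: "r \<le> L" using rhr hrL by linarith
  have Q0: "0 \<le> Q" using Q by linarith
  have L2: "L^2 \<le> 2 * exp L" using exp_lower_Taylor_quadratic[OF L] L by linarith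
  have L1: "L \<le> exp L" using exp_ge_add_one_self[of L] by linarith
  have r2: "r^2 \<le> L^2" using power_mono[OF rL r0, of 2] .
  have q1: "r^2 * \<bar>q\<bar> \<le> L^2 * Q" using r2 Q(1) by (rule mult_mono) auto
  have q2: "L^2 * Q \<le> 2 * exp L * Q" using L2 Q0 by (rule mult_right_mono)
  have a1: "t * (r^2 * \<bar>q\<bar>) \<le> 2 * Q * x"
  proof -
    have "t * (r^2 * \<bar>q\<bar>) \<le> t * (2 * exp L * Q)" using q1 q2 t by (intro mult_left_mono) auto
    also have "\<dots> = 2 * Q * x" using tp by (simp add: algebra_simps)
    finally show ?thesis .
  qed
  have g1: "r * \<bar>g\<bar> \<le> L * Q" using rL Q(2) r0 L by (intro mult_mono) auto
  have g2: "L * Q \<le> exp L * Q" using L1 Q0 by (rule mult_right_mono)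
  have a2: "t * (r * \<bar>g\<bar>) \<le> Q * x"
  proof -
    have "t * (r * \<bar>g\<bar>) \<le> t * (exp L * Q)" using g1 g2 t by (intro mult_left_mono) auto
    also have "\<dots> = Q * x" using tp by (simp add: algebra_simps)
    finally show ?thesis .
  qed
  have v1: "exp (h * r) * V \<le> exp L * V" using hrL V by (intro mult_right_mono) auto
  have a3: "t * (exp (h * r) * V) \<le> V * x"
  proof -
    have "t * (exp (h * r) * V) \<le> t * (exp L * V)" using v1 t by (intro mult_left_mono) auto
    also have "\<dots> = V * x" using tp by (simp add: algebra_simps)
    finally show ?thesis .
  qed
  have "t * (r^2 * \<bar>q\<bar> + r * \<bar>g\<bar> + exp (h * r) * V) = t * (r^2 * \<bar>q\<bar>) + t * (r * \<bar>g\<bar>) + t * (exp (h * r) * V)"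
    by (simp add: distrib_left)
  also have "\<dots> \<le> 2 * Q * x + Q * x + V * x" using a1 a2 a3 by linarith
  also have "\<dots> = (3 * Q + V) * x" by (simp add: algebra_simps)
  finally show ?thesis unfolding r_def .
qed

lemma lin_aux:
  fixes mt a b X Y P c l Z W :: real
  shows "mt \<le> a + b \<Longrightarrow> a \<le> X - Y/2 \<Longrightarrow> b \<le> P/6 \<Longrightarrow> c \<le> P/6 \<Longrightarrow> l \<le> P/6 \<Longrightarrow> P \<le> W
    \<Longrightarrow> mt + l - (Z + X) + (P + Y)/2 + c \<le> - Z + W"
  by argo

lemma final_arith:
  fixes x k d d' lnR lnK0 C0 D mt :: real
  assumes x1: "x \<ge> 1" and xk: "x \<ge> 12 * k / d'" and k: "k \<ge> 0" and d': "0 < d'" "d' \<le> 1/2" "d' \<le> d"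
    and RC: "lnR \<ge> 6 * C0 / d'" and RK: "lnR \<ge> 6 * \<bar>lnK0\<bar> / d'" and R0: "lnR \<ge> 0"
    and D: "D \<ge> 0" and mt: "mt \<le> k * D + k * lnR"
  shows "mt + lnK0 - (1 - d'/2) * x * (lnR + D) + C0 * x \<le> - (1 - d) * x * lnR"
proof -
  have kx: "12 * k \<le> d' * x" using xk d' by (simp add: field_simps)
  have x0: "x \<ge> 0" using x1 by simp
  have dx: "d' * x \<le> x / 2" using mult_right_mono[OF d'(2) x0] by simp
  have k1: "k \<le> (1 - d'/2) * x" using kx dx d' x0 by (simp add: algebra_simps)
  have f1: "k * D \<le> (1 - d'/2) * x * D" using k1 D by (rule mult_right_mono)
  have k2: "k \<le> (d'/6) * x" using kx k by simp
  have f2: "k * lnR \<le> (d'/6) * x * lnR" using k2 R0 by (rule mult_right_mono)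
  have c1: "C0 \<le> (d'/6) * lnR" using RC d' by (simp add: field_simps)
  have f3: "C0 * x \<le> (d'/6) * lnR * x" using c1 x0 by (rule mult_right_mono)
  have c2: "\<bar>lnK0\<bar> \<le> (d'/6) * lnR" using RK d' by (simp add: field_simps)
  have c3: "(d'/6) * lnR * 1 \<le> (d'/6) * lnR * x" using x1 d' R0 by (intro mult_left_mono) auto
  have f4: "lnK0 \<le> (d'/6) * lnR * x" using c2 c3 by linarith
  have f5: "(d' - d) * (x * lnR) \<le> 0" using d' x0 R0 by (intro mult_nonpos_nonneg) auto
  have g1: "k*D \<le> x*D - d'*(x*D)/2" using f1 by (simp add: algebra_simps)
  have g2: "k*lnR \<le> d'*(x*lnR)/6" using f2 by (simp add: algebra_simps)
  have g3: "C0*x \<le> d'*(x*lnR)/6" using f3 by (simp add: algebra_simps)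
  have g4: "lnK0 \<le> d'*(x*lnR)/6" using f4 by (simp add: algebra_simps)
  have g5: "d'*(x*lnR) \<le> d*(x*lnR)" using f5 by (simp add: algebra_simps)
  have m1: "mt \<le> k*D + k*lnR" using mt by (simp add: algebra_simps)
  have e1: "mt + lnK0 - (1 - d'/2) * x * (lnR + D) + C0 * x
     = mt + lnK0 - (x*lnR + x*D) + (d'*(x*lnR) + d'*(x*D))/2 + C0*x" by (simp add: algebra_simps)
  have e2: "- (1 - d) * x * lnR = - (x*lnR) + d*(x*lnR)" by (simp add: algebra_simps)
  have "mt + lnK0 - (x*lnR + x*D) + (d'*(x*lnR) + d'*(x*D))/2 + C0*x \<le> - (x*lnR) + d*(x*lnR)"
    by (rule lin_aux[OF m1 g1 g2 g3 g4 g5])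
  then show ?thesis unfolding e1 e2 .
qed



theorem lemmaA1:
  fixes nu :: "(real^'n) measure"
    and S :: "real^'n^'n"
    and G :: "real^'n"
    and h T :: "real \<Rightarrow> real"
    and M :: "real \<Rightarrow> 'a measure"
    and \<xi> :: "real \<Rightarrow> real \<Rightarrow> 'a \<Rightarrow> real^'n"
  assumes "levy_measure nu"
    and "sym_nonneg_def S"
    and "\<forall>\<Lambda>>1. h \<Lambda> \<ge> 1 \<and> T \<Lambda> > 0"
    and "filterlim (\<lambda>\<Lambda>. \<Lambda> / h \<Lambda>) at_top at_top"
    and "filterlim (\<lambda>\<Lambda>. \<Lambda> / (h \<Lambda> * T \<Lambda>)) at_top at_top"
    and "\<forall>\<Lambda>>1. levy_process (M \<Lambda>) (\<xi> \<Lambda>) S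
                  (density nu (indicator (cball 0 (h \<Lambda>)))) G"
  shows "\<forall>\<delta>>0. \<forall>k\<ge>0. \<exists>\<Lambda>\<^sub>1. \<forall>\<Lambda>. \<Lambda> > \<Lambda>\<^sub>1 \<and> \<Lambda> > 1 \<longrightarrow>
           (\<forall>t\<in>{0<..T \<Lambda>}.
              max 1 (t powr (-k)) * measure (M \<Lambda>) {\<omega> \<in> space (M \<Lambda>). norm (\<xi> \<Lambda> t \<omega>) > \<Lambda>}
              \<le> exp (- (1 - \<delta>) * (\<Lambda> / h \<Lambda>) * ln (\<Lambda> / (h \<Lambda> * T \<Lambda>))))"
proof (intro allI impI)
  fix \<delta> k :: real
  assume \<delta>: "0 < \<delta>" and k: "0 \<le> k"
  note L = assms(1)
  define d' where "d' = min \<delta> (1/2)"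
  define \<epsilon> where "\<epsilon> = d' / 6"
  have d': "0 < d'" "d' \<le> 1/2" "d' \<le> \<delta>" using \<delta> by (auto simp: d'_def)
  have e: "0 < \<epsilon>" "\<epsilon> < 1" using d' by (auto simp: \<epsilon>_def)
  obtain N :: "(real^'n) set" where N: "finite N" "N \<subseteq> sphere 0 1" "N \<noteq> {}"
    "\<And>x. \<exists>u\<in>N. u \<bullet> x \<ge> (1 - \<epsilon>) * norm x"
    using sphere_net[OF e(1)] by blast
  define Q where "Q = (\<Sum>u\<in>N. \<bar>u \<bullet> (S *v u)\<bar> + \<bar>u \<bullet> G\<bar>)"
  have Qb: "\<bar>u \<bullet> (S *v u)\<bar> \<le> Q \<and> \<bar>u \<bullet> G\<bar> \<le> Q" if "u \<in> N" for u
  proof -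
    have "\<bar>u \<bullet> (S *v u)\<bar> + \<bar>u \<bullet> G\<bar> \<le> Q"
      unfolding Q_def by (rule member_le_sum[OF that _ N(1)]) auto
    then show ?thesis by auto
  qed
  define V where "V = (\<integral>y. mfun y \<partial>nu)"
  have V0: "0 \<le> V" unfolding V_def by (rule integral_nonneg_AE) (simp add: mfun_def)
  have Q0: "0 \<le> Q" unfolding Q_def by (intro sum_nonneg) auto
  define C0 where "C0 = 3 * Q + V"
  have C00: "0 \<le> C0" using Q0 V0 by (simp add: C0_def)
  define K0 where "K0 = real (card N) * 2 / \<epsilon>"
  have cN: "card N > 0" using N(1,3) by (simp add: card_gt_0_iff)
  have K00: "K0 > 0" using cN e by (simp add: K0_def)
  define c1 where "c1 = 1 + 6 * C0 / d' + 6 * \<bar>ln K0\<bar> / d'"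
  define X0 where "X0 = 1 + 12 * k / d'"
  have ev1: "eventually (\<lambda>\<Lambda>. X0 \<le> \<Lambda> / h \<Lambda>) at_top" using assms(4) by (simp add: filterlim_at_top)
  have ev2: "eventually (\<lambda>\<Lambda>. exp c1 \<le> \<Lambda> / (h \<Lambda> * T \<Lambda>)) at_top" using assms(5) by (simp add: filterlim_at_top)
  obtain \<Lambda>1 where \<Lambda>1: "\<And>\<Lambda>. \<Lambda> \<ge> \<Lambda>1 \<Longrightarrow> X0 \<le> \<Lambda> / h \<Lambda> \<and> exp c1 \<le> \<Lambda> / (h \<Lambda> * T \<Lambda>)"
    using eventually_conj[OF ev1 ev2] unfolding eventually_at_top_linorder by blast
  show "\<exists>\<Lambda>\<^sub>1. \<forall>\<Lambda>. \<Lambda> > \<Lambda>\<^sub>1 \<and> \<Lambda> > 1 \<longrightarrow>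
           (\<forall>t\<in>{0<..T \<Lambda>}.
              max 1 (t powr (-k)) * measure (M \<Lambda>) {\<omega> \<in> space (M \<Lambda>). norm (\<xi> \<Lambda> t \<omega>) > \<Lambda>}
              \<le> exp (- (1 - \<delta>) * (\<Lambda> / h \<Lambda>) * ln (\<Lambda> / (h \<Lambda> * T \<Lambda>))))"
  proof (intro exI allI impI ballI)
    fix \<Lambda> t assume \<Lambda>: "\<Lambda>1 < \<Lambda> \<and> 1 < \<Lambda>" and t: "t \<in> {0<..T \<Lambda>}"
    have hT: "h \<Lambda> \<ge> 1" "T \<Lambda> > 0" using assms(3) \<Lambda> by auto
    have LP: "levy_process (M \<Lambda>) (\<xi> \<Lambda>) S (density nu (indicator (cball 0 (h \<Lambda>)))) G"
      using assms(6) \<Lambda> by auto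
    have t0: "0 < t" and tT: "t \<le> T \<Lambda>" using t by auto
    define x where "x = \<Lambda> / h \<Lambda>"
    define R where "R = \<Lambda> / (h \<Lambda> * T \<Lambda>)"
    have xX: "X0 \<le> x" and Rc: "exp c1 \<le> R" using \<Lambda>1[of \<Lambda>] \<Lambda> by (auto simp: x_def R_def)
    have kd: "0 \<le> 12 * k / d'" using k d' by simp
    have x1: "1 \<le> x" using xX kd by (simp add: X0_def)
    have xk: "12 * k / d' \<le> x" using xX by (simp add: X0_def)
    have x0: "0 < x" using x1 by simp
    have R0: "0 < R" using Rc by (metis exp_gt_zero order_less_le_trans)
    have RxT: "R = x / T \<Lambda>" by (simp add: R_def x_def)
    define lnR where "lnR = ln R"
    have c1R: "c1 \<le> lnR" using Rc R0 unfolding lnR_def by (metis exp_le_cancel_iff exp_ln)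
    have c11: "1 \<le> c1" using C00 d' by (simp add: c1_def)
    have lnR0: "0 < lnR" using c1R c11 by simp
    have RC: "6 * C0 / d' \<le> lnR" and RK: "6 * \<bar>ln K0\<bar> / d' \<le> lnR"
      using c1R d' C00 by (simp_all add: c1_def) (smt (verit) divide_nonneg_pos abs_ge_zero)+
    define \<rho> where "\<rho> = x / t"
    define Lr where "Lr = ln \<rho>"
    define D where "D = ln (T \<Lambda>) - ln t"
    have D0: "0 \<le> D" using tT t0 unfolding D_def by simp
    have lnRe: "lnR = ln x - ln (T \<Lambda>)" unfolding lnR_def RxT using x0 hT by (simp add: ln_div)
    have Lre: "Lr = ln x - ln t" unfolding Lr_def \<rho>_def using x0 t0 by (simp add: ln_div)
    have LrD: "Lr = lnR + D" using lnRe Lre D_def by simp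
    have Lr0: "0 \<le> Lr" using LrD lnR0 D0 by simp
    have rho0: "0 < \<rho>" using x0 t0 by (simp add: \<rho>_def)
    have tp: "t * exp Lr = x" unfolding Lr_def using rho0 t0 by (simp add: \<rho>_def)
    define r where "r = (1 - \<epsilon>) * Lr / h \<Lambda>"
    define \<theta> where "\<theta> = (1 - \<epsilon>) * r"
    have r0: "0 < r" using e lnR0 D0 LrD hT by (simp add: r_def)
    have th: "0 < \<theta>" "\<theta> < r" using r0 e by (simp_all add: \<theta>_def mult_less_cancel_right1)
    have rat: "1 - \<theta> / r = \<epsilon>" using r0 by (simp add: \<theta>_def field_simps)
    have tu: "measure (M \<Lambda>) {\<omega> \<in> space (M \<Lambda>). norm (\<xi> \<Lambda> t \<omega>) > \<Lambda>}
     \<le> (\<Sum>u\<in>N. exp (- \<theta> * ((1 - \<epsilon>) * \<Lambda>)) * (2 * exp (t * Psi S G nu (h \<Lambda>) u r) / (1 - \<theta> / r)))"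
      by (rule tail_union[OF LP L hT(1) t0 N(1) N(2) N(4) e r0 th])
    have trm2: "exp (- \<theta> * ((1 - \<epsilon>) * \<Lambda>)) * (2 * exp (t * Psi S G nu (h \<Lambda>) u r) / (1 - \<theta> / r))
        \<le> exp (- \<theta> * ((1 - \<epsilon>) * \<Lambda>)) * (2 * exp (C0 * x) / \<epsilon>)" if u: "u \<in> N" for u
    proof -
      have "t * Psi S G nu (h \<Lambda>) u r \<le> (3 * Q + V) * x"
        unfolding Psi_def r_def V_def[symmetric]
        by (rule Psi_asym[OF Lr0 tp t0 e hT(1)]) (use Qb[OF u] V0 in auto)
      then have "exp (t * Psi S G nu (h \<Lambda>) u r) \<le> exp (C0 * x)" by (simp add: C0_def)
      then show ?thesis unfolding rat using e by (intro mult_left_mono divide_right_mono) auto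
    qed
    have Pb: "measure (M \<Lambda>) {\<omega> \<in> space (M \<Lambda>). norm (\<xi> \<Lambda> t \<omega>) > \<Lambda>}
        \<le> K0 * exp (- \<theta> * ((1 - \<epsilon>) * \<Lambda>) + C0 * x)"
    proof -
      have "(\<Sum>u\<in>N. exp (- \<theta> * ((1 - \<epsilon>) * \<Lambda>)) * (2 * exp (t * Psi S G nu (h \<Lambda>) u r) / (1 - \<theta> / r)))
         \<le> (\<Sum>u\<in>N. exp (- \<theta> * ((1 - \<epsilon>) * \<Lambda>)) * (2 * exp (C0 * x) / \<epsilon>))"
        by (rule sum_mono) (rule trm2)
      also have "\<dots> = K0 * exp (- \<theta> * ((1 - \<epsilon>) * \<Lambda>) + C0 * x)"
      proof -
        have ee: "exp (- \<theta> * ((1 - \<epsilon>) * \<Lambda>)) * exp (C0 * x) = exp (- \<theta> * ((1 - \<epsilon>) * \<Lambda>) + C0 * x)"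
          by (rule mult_exp_exp)
        show ?thesis unfolding K0_def ee[symmetric] by simp
      qed
      finally show ?thesis using tu by linarith
    qed
    have thL: "\<theta> * ((1 - \<epsilon>) * \<Lambda>) = (1 - \<epsilon>)^3 * (x * Lr)"
      using hT by (simp add: \<theta>_def r_def x_def power3_eq_cube field_simps)
    have e3: "1 - d'/2 \<le> (1 - \<epsilon>)^3"
    proof -
      have "(1 - \<epsilon>)^3 = 1 - 3 * \<epsilon> + \<epsilon>^2 * (3 - \<epsilon>)" by (simp add: power3_eq_cube power2_eq_square algebra_simps)
      moreover have "0 \<le> \<epsilon>^2 * (3 - \<epsilon>)" using e by simp
      ultimately show ?thesis by (simp add: \<epsilon>_def)
    qed
    have xL0: "0 \<le> x * Lr" using x0 Lr0 by simp
    have ex1: "- \<theta> * ((1 - \<epsilon>) * \<Lambda>) \<le> - ((1 - d'/2) * x * Lr)"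
      using mult_right_mono[OF e3 xL0] thL by (simp add: mult.assoc)
    define mt where "mt = max 0 (- k * ln t)"
    have mx: "max 1 (t powr (-k)) = exp mt"
      unfolding mt_def using t0 by (simp add: powr_def max_def)
    have mtb: "mt \<le> k * D + k * lnR"
    proof -
      have lx: "0 \<le> ln x" using x1 by simp
      have "- k * ln t = k * D + k * (- ln (T \<Lambda>))" by (simp add: D_def algebra_simps)
      also have "\<dots> \<le> k * D + k * lnR"
        using lnRe lx k by (intro add_left_mono mult_left_mono) auto
      finally have a: "- k * ln t \<le> k * D + k * lnR" .
      have b: "0 \<le> k * D + k * lnR" using k D0 lnR0 by simp
      show ?thesis using a b unfolding mt_def by simp
    qed
    have fa: "mt + ln K0 - (1 - d'/2) * x * (lnR + D) + C0 * x \<le> - (1 - \<delta>) * x * lnR"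
      by (rule final_arith[OF x1 xk k d' RC RK _ D0 mtb]) (use lnR0 in simp)
    have "max 1 (t powr (-k)) * measure (M \<Lambda>) {\<omega> \<in> space (M \<Lambda>). norm (\<xi> \<Lambda> t \<omega>) > \<Lambda>}
        \<le> exp mt * (K0 * exp (- \<theta> * ((1 - \<epsilon>) * \<Lambda>) + C0 * x))"
      unfolding mx by (rule mult_left_mono[OF Pb]) simp
    also have "\<dots> \<le> exp mt * (K0 * exp (- ((1 - d'/2) * x * Lr) + C0 * x))"
      using ex1 K00 by (intro mult_left_mono) auto
    also have "\<dots> = exp (mt + ln K0 - (1 - d'/2) * x * (lnR + D) + C0 * x)"
    proof -
      have z1: "exp mt * (K0 * exp (- ((1 - d'/2) * x * Lr) + C0 * x)) = exp (mt + ln K0 + (- ((1 - d'/2) * x * Lr) + C0 * x))"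
        using K00 by (simp add: exp_add mult_ac)
      have z2: "mt + ln K0 + (- ((1 - d'/2) * x * Lr) + C0 * x) = mt + ln K0 - (1 - d'/2) * x * (lnR + D) + C0 * x"
        using LrD by simp
      show ?thesis unfolding z1 z2 ..
    qed
    also have "\<dots> \<le> exp (- (1 - \<delta>) * x * lnR)" using fa by simp
    finally show "max 1 (t powr (-k)) * measure (M \<Lambda>) {\<omega> \<in> space (M \<Lambda>). norm (\<xi> \<Lambda> t \<omega>) > \<Lambda>}
              \<le> exp (- (1 - \<delta>) * (\<Lambda> / h \<Lambda>) * ln (\<Lambda> / (h \<Lambda> * T \<Lambda>)))"
      by (simp add: x_def lnR_def R_def)
  qed
qed

end
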